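(* Let $\lambda>0$ and let $L_0,S_0\in\mathbb{R}^{n\times n}$. Suppose the program \[ \text{minimize } \|L\|_*+\lambda\|S\|_1\quad\text{subject to}\quad L+S=M_0 \] with $M_0=L_0+S_0$ has the unique solution $(L_0,S_0)$. Let $S_0'$ be a trimmed version of $S_0$ and $M_0'=L_0+S_0'$. Then the same program with input $M_0'$ in place of $M_0$ is exact, i.e. its solution is $(L_0,S_0')$.
   Context: $\|L\|_*$ is the nuclear norm (sum of singular values) and $\|S\|_1=\sum_{ij}|S_{ij}|$. A matrix $S'$ is a trimmed version of $S$ if $\mathrm{supp}(S')\subset\mathrm{supp}(S)$ and $S'_{ij}=S_{ij}$ whenever $S'_{ij}\neq0$ (i.e. $S'$ is obtained by setting some entries of $S$ to zero). *)

theory Defs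
  imports "HOL-Analysis.Analysis"
begin

definition diag_mat :: "('n::finite \<Rightarrow> real) \<Rightarrow> real^'n^'n" where
  "diag_mat \<sigma> = (\<chi> i j. if i = j then \<sigma> i else 0)"

definition nuclear_norm :: "real^'n::finite^'n \<Rightarrow> real" where
  "nuclear_norm A = (THE s. \<exists>U V \<sigma>. orthogonal_matrix U \<and> orthogonal_matrix V \<and>
      (\<forall>i. \<sigma> i \<ge> 0) \<and> A = U ** diag_mat \<sigma> ** transpose V \<and> s = (\<Sum>i\<in>UNIV. \<sigma> i))"

definition l1_norm :: "real^'n::finite^'n \<Rightarrow> real" where
  "l1_norm S = (\<Sum>i\<in>UNIV. \<Sum>j\<in>UNIV. \<bar>S $ i $ j\<bar>)"

definition pcp_obj :: "real \<Rightarrow> real^'n::finite^'n \<Rightarrow> real^'n^'n \<Rightarrow> real" where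
  "pcp_obj lam L S = nuclear_norm L + lam * l1_norm S"

definition unique_solution :: "real \<Rightarrow> real^'n::finite^'n \<Rightarrow> real^'n^'n \<Rightarrow> real^'n^'n \<Rightarrow> bool" where
  "unique_solution lam M L S \<longleftrightarrow> L + S = M \<and>
     (\<forall>L' S'. L' + S' = M \<and> (L', S') \<noteq> (L, S) \<longrightarrow> pcp_obj lam L S < pcp_obj lam L' S')"

definition trimmed :: "real^'n::finite^'n \<Rightarrow> real^'n^'n \<Rightarrow> bool" where
  "trimmed S' S \<longleftrightarrow> (\<forall>i j. S' $ i $ j \<noteq> 0 \<longrightarrow> S' $ i $ j = S $ i $ j)"

end

theory Submission
  imports Defs
begin

lemma l1_tri: "l1_norm (A + B) \<le> l1_norm A + l1_norm (B::real^'n::finite^'n)"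
  unfolding l1_norm_def
  by (simp add: sum.distrib[symmetric] sum_mono abs_triangle_ineq)

lemma l1_trim:
  assumes "trimmed S' S"
  shows "l1_norm S = l1_norm S' + l1_norm (S - (S'::real^'n::finite^'n))"
proof -
  have "\<And>i j. \<bar>S $ i $ j\<bar> = \<bar>S' $ i $ j\<bar> + \<bar>S $ i $ j - S' $ i $ j\<bar>"
    using assms unfolding trimmed_def by (metis abs_zero add.right_neutral add_0 diff_self diff_zero)
  then show ?thesis unfolding l1_norm_def by (simp add: sum.distrib[symmetric])
qed

theorem theorem2p1:
  fixes lam :: real and L0 S0 S0' :: "real^'n::finite^'n"
  assumes "lam > 0"
    and "unique_solution lam (L0 + S0) L0 S0"
    and "trimmed S0' S0"
  shows "unique_solution lam (L0 + S0') L0 S0'"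
  unfolding unique_solution_def
proof (intro conjI allI impI)
  fix L S :: "real^'n^'n"
  assume h: "L + S = L0 + S0' \<and> (L, S) \<noteq> (L0, S0')"
  show "pcp_obj lam L0 S0' < pcp_obj lam L S"
  proof (rule ccontr)
    assume c: "\<not> ?thesis"
    define D where "D = S0 - S0'"
    have e1: "L + (S + D) = L0 + S0" using h unfolding D_def by (simp add: algebra_simps)
    have ne: "(L, S + D) \<noteq> (L0, S0)" using h unfolding D_def by auto
    have lt: "pcp_obj lam L0 S0 < pcp_obj lam L (S + D)"
      using assms(2) e1 ne unfolding unique_solution_def by blast
    have "l1_norm (S + D) \<le> l1_norm S + l1_norm D" by (rule l1_tri)
    moreover have "l1_norm S0 = l1_norm S0' + l1_norm D" using l1_trim[OF assms(3)] D_def by simp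
    ultimately have "pcp_obj lam L (S + D) \<le> pcp_obj lam L S + lam * l1_norm D"
      using assms(1) unfolding pcp_obj_def
      by (smt (verit) mult_left_mono distrib_left)
    moreover have "pcp_obj lam L0 S0 = pcp_obj lam L0 S0' + lam * l1_norm D"
      using \<open>l1_norm S0 = _\<close> unfolding pcp_obj_def by (simp add: distrib_left)
    ultimately show False using c lt by linarith
  qed
qed simp

end
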